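(* Let $m\ge 1$, $P,Q\ge 0$ be integers with $N=P+Q\ge1$, let $D$, $F_1,\ldots,F_m$, $\mathcal{E}$, $d$ and $G_F:\mathcal{E}\to\mathcal{E}$ be as described in the context, and assume that the state network of $G_F$ is strongly connected. Then $G_F$ is chaotic in the sense of Devaney on $(\mathcal{E},d)$: it is topologically transitive, its periodic points are dense in $\mathcal{E}$, and it has sensitive dependence on initial conditions (there is $\delta>0$ such that for every $E\in\mathcal{E}$ and every $\varepsilon>0$ there exist $E'\in\mathcal{E}$ with $d(E,E')<\varepsilon$ and $n\ge0$ with $d(G_F^n(E),G_F^n(E'))>\delta$).
   Context: Let $D=\{k\,2^{-Q}: k=0,1,\ldots,2^N-1\}$ be the set of $N$-bit fixed-point numbers; each $x\in D$ is written in binary as $x=x_{P-1}x_{P-2}\ldots x_0.x_{-1}\ldots x_{-Q}$ with digits $x_j\in\{0,1\}$. For $x,y\in D$ let $x\cdot y$, $x+y$ and $\overline{x}$ denote bitwise AND, bitwise OR and bitwise NOT (complement of every one of the $N$ digits), which are again elements of $D$. Let $F_1,\ldots,F_m:D^m\to D$ be arbitrary functions. Let $\Sigma$ be the set of one-sided infinite sequences $w=w^1w^2\ldots$ with $w^k\in D$, and $\sigma:\Sigma\to\Sigma$ the left shift $\sigma(w)=w^2w^3\ldots$. Let $\mathcal{E}=\Sigma^m\times D^m$, with elements $E=((w_1,\ldots,w_m),(x_1,\ldots,x_m))$. Define $G_F:\mathcal{E}\to\mathcal{E}$ by $G_F((w_1,\ldots,w_m),x)=((\sigma(w_1),\ldots,\sigma(w_m)),(H_1,\ldots,H_m))$,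 where $x=(x_1,\ldots,x_m)$ and $H_i=(x_i\cdot\overline{w_i^1})+(F_i(x)\cdot w_i^1)$ (i.e. bit $j$ of $x_i$ is replaced by bit $j$ of $F_i(x)$ exactly when bit $j$ of $w_i^1$ is $1$). The metric on $\mathcal{E}$ is $d(E,\hat E)=\sum_{i=1}^m\sum_{k=1}^\infty \frac{|w_i^k-\hat w_i^k|}{2^{Nk}}+\sqrt{\sum_{i=1}^m (x_i-\hat x_i)^2}$. The state network of $G_F$ is the directed graph whose vertex set is $D^m$, with an edge from $\hat x$ to $\tilde x$ whenever there is some $(w_1,\ldots,w_m)\in\Sigma^m$ such that the $D^m$-component of $G_F((w_1,\ldots,w_m),\hat x)$ equals $\tilde x$. It is strongly connected if every vertex is reachable from every other vertex by a directed path. *)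

theory Defs
  imports Complex_Main
begin

text \<open>Fixed-point numbers with P integer and Q fractional bits (N = P + Q).
  The m components are indexed by a finite type 'm (so m = CARD('m) \<ge> 1).\<close>

definition Dset :: "nat \<Rightarrow> nat \<Rightarrow> real set" where
  "Dset P Q = {real k / 2 ^ Q | k. k < 2 ^ (P + Q)}"

text \<open>Integer code k of x = k 2^(-Q); its binary digits are the N digits of x.\<close>
definition fcode :: "nat \<Rightarrow> real \<Rightarrow> nat" where
  "fcode Q x = nat \<lfloor>x * 2 ^ Q\<rfloor>"

definition fdec :: "nat \<Rightarrow> nat \<Rightarrow> real" where
  "fdec Q k = real k / 2 ^ Q"

definition bit_and_D :: "nat \<Rightarrow> real \<Rightarrow> real \<Rightarrow> real" where
  "bit_and_D Q x y = fdec Q (and (fcode Q x) (fcode Q y))"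

definition bit_or_D :: "nat \<Rightarrow> real \<Rightarrow> real \<Rightarrow> real" where
  "bit_or_D Q x y = fdec Q (or (fcode Q x) (fcode Q y))"

definition bit_not_D :: "nat \<Rightarrow> nat \<Rightarrow> real \<Rightarrow> real" where
  "bit_not_D P Q x = fdec Q (xor (fcode Q x) (mask (P + Q)))"

text \<open>Phase space: w i k is the (k+1)-th term w_i^(k+1) of the sequence w_i, x i is x_i.\<close>
definition Espace :: "nat \<Rightarrow> nat \<Rightarrow> (('m \<Rightarrow> nat \<Rightarrow> real) \<times> ('m \<Rightarrow> real)) set" where
  "Espace P Q = {(w, x). (\<forall>i k. w i k \<in> Dset P Q) \<and> (\<forall>i. x i \<in> Dset P Q)}"

definition Gmap :: "nat \<Rightarrow> nat \<Rightarrow> ('m \<Rightarrow> ('m \<Rightarrow> real) \<Rightarrow> real)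
    \<Rightarrow> ('m \<Rightarrow> nat \<Rightarrow> real) \<times> ('m \<Rightarrow> real) \<Rightarrow> ('m \<Rightarrow> nat \<Rightarrow> real) \<times> ('m \<Rightarrow> real)" where
  "Gmap P Q F E = (case E of (w, x) \<Rightarrow>
     ((\<lambda>i k. w i (Suc k)),
      (\<lambda>i. bit_or_D Q (bit_and_D Q (x i) (bit_not_D P Q (w i 0)))
                       (bit_and_D Q (F i x) (w i 0)))))"

definition dist_E :: "nat \<Rightarrow> ('m::finite \<Rightarrow> nat \<Rightarrow> real) \<times> ('m \<Rightarrow> real)
    \<Rightarrow> ('m \<Rightarrow> nat \<Rightarrow> real) \<times> ('m \<Rightarrow> real) \<Rightarrow> real" where
  "dist_E N E E' = (case E of (w, x) \<Rightarrow> case E' of (w', x') \<Rightarrow>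
     (\<Sum>i\<in>UNIV. (\<Sum>k. \<bar>w i k - w' i k\<bar> / 2 ^ (N * Suc k)))
     + sqrt (\<Sum>i\<in>UNIV. (x i - x' i)\<^sup>2))"

definition state_edges :: "nat \<Rightarrow> nat \<Rightarrow> ('m \<Rightarrow> ('m \<Rightarrow> real) \<Rightarrow> real)
    \<Rightarrow> (('m \<Rightarrow> real) \<times> ('m \<Rightarrow> real)) set" where
  "state_edges P Q F = {(a, b). (\<forall>i. a i \<in> Dset P Q) \<and> (\<forall>i. b i \<in> Dset P Q) \<and>
      (\<exists>w. (\<forall>i k. w i k \<in> Dset P Q) \<and> snd (Gmap P Q F (w, a)) = b)}"

definition strongly_connected_state_network :: "nat \<Rightarrow> nat \<Rightarrow> ('m \<Rightarrow> ('m \<Rightarrow> real) \<Rightarrow> real) \<Rightarrow> bool" where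
  "strongly_connected_state_network P Q F \<longleftrightarrow>
     (\<forall>a b. (\<forall>i. a i \<in> Dset P Q) \<longrightarrow> (\<forall>i. b i \<in> Dset P Q) \<longrightarrow>
        (a, b) \<in> (state_edges P Q F)\<^sup>*)"

definition d_open :: "'a set \<Rightarrow> ('a \<Rightarrow> 'a \<Rightarrow> real) \<Rightarrow> 'a set \<Rightarrow> bool" where
  "d_open S d U \<longleftrightarrow> U \<subseteq> S \<and> (\<forall>x\<in>U. \<exists>e>0. \<forall>y\<in>S. d x y < e \<longrightarrow> y \<in> U)"

definition topologically_transitive :: "'a set \<Rightarrow> ('a \<Rightarrow> 'a \<Rightarrow> real) \<Rightarrow> ('a \<Rightarrow> 'a) \<Rightarrow> bool" where
  "topologically_transitive S d f \<longleftrightarrow>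
     (\<forall>U V. d_open S d U \<longrightarrow> d_open S d V \<longrightarrow> U \<noteq> {} \<longrightarrow> V \<noteq> {} \<longrightarrow>
        (\<exists>n>0. (f ^^ n) ` U \<inter> V \<noteq> {}))"

definition dense_periodic_points :: "'a set \<Rightarrow> ('a \<Rightarrow> 'a \<Rightarrow> real) \<Rightarrow> ('a \<Rightarrow> 'a) \<Rightarrow> bool" where
  "dense_periodic_points S d f \<longleftrightarrow>
     (\<forall>x\<in>S. \<forall>e>0. \<exists>p\<in>S. d x p < e \<and> (\<exists>n>0. (f ^^ n) p = p))"

definition sensitive_dependence :: "'a set \<Rightarrow> ('a \<Rightarrow> 'a \<Rightarrow> real) \<Rightarrow> ('a \<Rightarrow> 'a) \<Rightarrow> bool" where
  "sensitive_dependence S d f \<longleftrightarrow>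
     (\<exists>\<delta>>0. \<forall>x\<in>S. \<forall>e>0. \<exists>y\<in>S. d x y < e \<and> (\<exists>n. d ((f ^^ n) x) ((f ^^ n) y) > \<delta>))"

definition devaney_chaotic :: "'a set \<Rightarrow> ('a \<Rightarrow> 'a \<Rightarrow> real) \<Rightarrow> ('a \<Rightarrow> 'a) \<Rightarrow> bool" where
  "devaney_chaotic S d f \<longleftrightarrow>
     topologically_transitive S d f \<and> dense_periodic_points S d f \<and> sensitive_dependence S d f"

end

theory Submission
  imports Defs
begin

lemma or_lt:
  assumes "(a::nat) < 2^n" "b < 2^n" shows "or a b < 2^n"
proof -
  have "take_bit n a = a" "take_bit n b = b" using assms by (simp_all add: take_bit_nat_eq_self_iff)
  hence "or a b = take_bit n (or a b)" by simp
  also have "\<dots> < 2^n" by (rule take_bit_nat_less_exp)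
  finally show ?thesis .
qed

lemma and_le: "and (a::nat) c \<le> a"
proof -
  have "int (and a c) = and (int a) (int c)" by (rule of_nat_and_eq)
  also have "\<dots> \<le> int a" by (rule AND_upper1) simp
  finally show ?thesis by simp
qed

lemma and_lt: "(a::nat) < 2^n \<Longrightarrow> and a c < 2^n"
  using and_le[of a c] by linarith

lemma D_bounds: assumes "x \<in> Dset P Q" shows "0 \<le> x \<and> x < 2^P"
proof -
  obtain k where k: "x = real k / 2^Q" "k < 2^(P+Q)" using assms unfolding Dset_def by blast
  have "real k < 2^(P+Q)" using k(2) by (metis of_nat_less_iff of_nat_numeral of_nat_power)
  hence "real k / 2^Q < 2^(P+Q) / 2^Q" by (simp add: divide_strict_right_mono)
  also have "\<dots> = 2^P" by (simp add: power_add)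
  finally show ?thesis using k by simp
qed

lemma D_zero: "0 \<in> Dset P Q"
  unfolding Dset_def by (rule CollectI, rule exI[of _ 0]) simp

lemma D_one: "P + Q \<ge> 1 \<Longrightarrow> 1 / 2^Q \<in> Dset P Q"
  unfolding Dset_def
proof (rule CollectI, rule exI[of _ 1])
  assume "P + Q \<ge> 1"
  hence "0 < P + Q" by linarith
  hence "(1::nat) < 2^(P+Q)" by (intro one_less_power) auto
  thus "1 / 2 ^ Q = real 1 / 2 ^ Q \<and> 1 < (2::nat) ^ (P + Q)" by simp
qed

lemma D_pos: assumes "x \<in> Dset P Q" "x \<noteq> 0" shows "1/2^Q \<le> x"
proof -
  obtain k where k: "x = real k / 2^Q" using assms unfolding Dset_def by blast
  with assms have "k \<ge> 1" by (cases k) auto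
  hence "real k \<ge> 1" by simp
  thus ?thesis using k by (simp add: divide_right_mono)
qed

lemma fdec_D: "k < 2^(P+Q) \<Longrightarrow> fdec Q k \<in> Dset P Q"
  unfolding Dset_def fdec_def by blast

lemma fcode_fdec: "fcode Q (fdec Q k) = k"
  unfolding fcode_def fdec_def by simp

lemma fcode_D: assumes "x \<in> Dset P Q" shows "fcode Q x < 2^(P+Q)"
proof -
  obtain k where k: "x = real k / 2^Q" "k < 2^(P+Q)" using assms unfolding Dset_def by blast
  have "x = fdec Q k" using k by (simp add: fdec_def)
  thus ?thesis using k fcode_fdec by metis
qed

lemma Gmap_fst: "fst (Gmap P Q F (w, x)) = (\<lambda>i k. w i (Suc k))"
  by (simp add: Gmap_def)

lemma Gmap_snd_dep: "(\<forall>i. w i 0 = w' i 0) \<Longrightarrow> snd (Gmap P Q F (w, x)) = snd (Gmap P Q F (w', x))"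
  by (simp add: Gmap_def)

lemma Gmap_D:
  assumes "\<forall>i. x i \<in> Dset P Q" "\<forall>i. F i x \<in> Dset P Q"
  shows "snd (Gmap P Q F (w, x)) i \<in> Dset P Q"
proof -
  have a: "fcode Q (x i) < 2^(P+Q)" "fcode Q (F i x) < 2^(P+Q)" using assms fcode_D by blast+
  show ?thesis
    unfolding Gmap_def bit_or_D_def bit_and_D_def fcode_fdec
    by (simp add: fcode_fdec, rule fdec_D, rule or_lt; rule and_lt; fact)
qed

lemma Gmap_split: "Gmap P Q F (w, x) = ((\<lambda>i k. w i (Suc k)), snd (Gmap P Q F (w, x)))"
  by (simp add: Gmap_def)

lemma iter_Suc: "(Gmap P Q F ^^ Suc n) (w, x) = (Gmap P Q F ^^ n) ((\<lambda>i k. w i (Suc k)), snd (Gmap P Q F (w, x)))"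
  unfolding funpow_Suc_right comp_apply
  by (rule arg_cong[where f="Gmap P Q F ^^ n"]) (rule Gmap_split)

lemma iter_fst: "fst ((Gmap P Q F ^^ n) (w, x)) = (\<lambda>i k. w i (k + n))"
proof (induction n arbitrary: w x)
  case 0 then show ?case by simp
next
  case (Suc n)
  have "(Gmap P Q F ^^ Suc n) (w, x) = (Gmap P Q F ^^ n) (Gmap P Q F (w, x))"
    by (simp add: funpow_Suc_right del: funpow.simps)
  also have "Gmap P Q F (w, x) = ((\<lambda>i k. w i (Suc k)), snd (Gmap P Q F (w, x)))"
    by (simp add: Gmap_def)
  finally show ?case using Suc by simp
qed

lemma iter_snd_dep:
  "(\<forall>i k. k < n \<longrightarrow> w i k = w' i k) \<Longrightarrow> snd ((Gmap P Q F ^^ n) (w, x)) = snd ((Gmap P Q F ^^ n) (w', x))"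
proof (induction n arbitrary: w w' x)
  case 0 then show ?case by simp
next
  case (Suc n)
  have e: "\<And>v. (Gmap P Q F ^^ Suc n) (v, x) = (Gmap P Q F ^^ n) ((\<lambda>i k. v i (Suc k)), snd (Gmap P Q F (v, x)))"
    by (rule iter_Suc)
  have "snd (Gmap P Q F (w, x)) = snd (Gmap P Q F (w', x))"
    using Suc.prems by (intro Gmap_snd_dep) auto
  moreover have "\<forall>i k. k < n \<longrightarrow> w i (Suc k) = w' i (Suc k)" using Suc.prems by auto
  ultimately show ?case unfolding e using Suc.IH[of "\<lambda>i k. w i (Suc k)" "\<lambda>i k. w' i (Suc k)"] by simp
qed

lemma iter_eq: "(Gmap P Q F ^^ n) (w, x) = ((\<lambda>i k. w i (k + n)), snd ((Gmap P Q F ^^ n) (w, x)))"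
  using iter_fst[where P=P and Q=Q and F=F and n=n and w=w and x=x] by (cases "(Gmap P Q F ^^ n) (w, x)") simp

lemma iter_D:
  assumes "\<forall>i. x i \<in> Dset P Q" "\<And>i x. (\<forall>j. x j \<in> Dset P Q) \<Longrightarrow> F i x \<in> Dset P Q"
  shows "\<forall>i. snd ((Gmap P Q F ^^ n) (w, x)) i \<in> Dset P Q"
  using assms(1)
proof (induction n arbitrary: w x)
  case 0 then show ?case by simp
next
  case (Suc n)
  have e: "(Gmap P Q F ^^ Suc n) (w, x) = (Gmap P Q F ^^ n) ((\<lambda>i k. w i (Suc k)), snd (Gmap P Q F (w, x)))"
    by (rule iter_Suc)
  have "\<forall>i. F i x \<in> Dset P Q" using Suc.prems by (simp add: assms(2))
  hence "\<forall>i. snd (Gmap P Q F (w, x)) i \<in> Dset P Q"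
    using Gmap_D[OF Suc.prems] by blast
  then show ?case unfolding e using Suc.IH by blast
qed

lemma path:
  assumes "(a, b) \<in> (state_edges P Q F)\<^sup>*"
  shows "\<exists>n u. (\<forall>i k. u i k \<in> Dset P Q) \<and>
     (\<forall>w. (\<forall>i k. k < n \<longrightarrow> w i k = u i k) \<longrightarrow> snd ((Gmap P Q F ^^ n) (w, a)) = b)"
  using assms
proof (induction rule: converse_rtrancl_induct)
  case base
  show ?case by (rule exI[of _ 0], rule exI[of _ "\<lambda>i k. 0"]) (simp add: D_zero)
next
  case (step a c)
  obtain n u where nu: "\<forall>i k. u i k \<in> Dset P Q"
     "\<forall>w. (\<forall>i k. k < n \<longrightarrow> w i k = u i k) \<longrightarrow> snd ((Gmap P Q F ^^ n) (w, c)) = b"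
    using step.IH by blast
  obtain w0 where w0: "\<forall>i k. w0 i k \<in> Dset P Q" "snd (Gmap P Q F (w0, a)) = c"
    using step.hyps(1) unfolding state_edges_def by blast
  define u' where "u' = (\<lambda>i k. if k = 0 then w0 i 0 else u i (k - 1))"
  have "\<forall>i k. u' i k \<in> Dset P Q" using nu w0 unfolding u'_def by auto
  moreover have "snd ((Gmap P Q F ^^ Suc n) (w, a)) = b" if h: "\<forall>i k. k < Suc n \<longrightarrow> w i k = u' i k" for w
  proof -
    have e: "(Gmap P Q F ^^ Suc n) (w, a) = (Gmap P Q F ^^ n) ((\<lambda>i k. w i (Suc k)), snd (Gmap P Q F (w, a)))"
      by (rule iter_Suc)
    have "snd (Gmap P Q F (w, a)) = c" using h w0(2) Gmap_snd_dep unfolding u'_def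
      by (metis zero_less_Suc)
    moreover have "\<forall>i k. k < n \<longrightarrow> w i (Suc k) = u i k" using h unfolding u'_def by auto
    ultimately show ?thesis unfolding e using nu(2) by auto
  qed
  ultimately show ?case by blast
qed

lemma dist_tail:
  fixes w w' :: "'m::finite \<Rightarrow> nat \<Rightarrow> real"
  assumes N: "N \<ge> 1" and D1: "\<forall>i k. w i k \<in> Dset P Q" and D2: "\<forall>i k. w' i k \<in> Dset P Q"
    and ag: "\<forall>i k. k < K \<longrightarrow> w i k = w' i k"
  shows "dist_E N (w, x) (w', x) \<le> real (card (UNIV::'m set)) * (2^P / 2^K)"
proof -
  have b: "(\<Sum>k. \<bar>w i k - w' i k\<bar> / 2^(N * Suc k)) \<le> 2^P / 2^K" for i
  proof -
    define f where "f k = \<bar>w i k - w' i k\<bar> / 2^(N * Suc k)" for k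
    have f0: "0 \<le> f k" for k by (simp add: f_def)
    have fb: "f k \<le> 2^P * (1/2)^Suc k" for k
    proof -
      have a1: "0 \<le> w i k \<and> w i k < 2^P" using D_bounds D1 by blast
      have a2: "0 \<le> w' i k \<and> w' i k < 2^P" using D_bounds D2 by blast
      have "\<bar>w i k - w' i k\<bar> \<le> 2^P" using a1 a2 by linarith
      moreover have "(2::real)^Suc k \<le> 2^(N * Suc k)" proof (rule power_increasing)
        have "1 * Suc k \<le> N * Suc k" using N by (rule mult_le_mono1)
        thus "Suc k \<le> N * Suc k" by simp
      qed simp
      ultimately have "f k \<le> 2^P / 2^Suc k" unfolding f_def
        by (intro frac_le) simp_all
      thus ?thesis by (simp add: power_one_over)
    qed
    have hs: "(\<lambda>n. 2^P * (1/2::real)^Suc n) sums (2^P * 1)"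
      by (rule sums_mult[OF power_half_series])
    have sf: "summable f"
      by (rule summable_comparison_test'[where g="\<lambda>k. 2^P * (1/2)^Suc k" and N=0])
         (use hs sums_summable f0 fb in auto)
    have "suminf f = (\<Sum>n. f (n + K))"
      using suminf_split_initial_segment[OF sf, of K] ag by (simp add: f_def)
    also have "\<dots> \<le> (\<Sum>n. 2^P / 2^K * (1/2::real)^Suc n)"
    proof (rule suminf_le)
      fix n
      have "f (n + K) \<le> 2^P * (1/2)^Suc (n + K)" by (rule fb)
      also have "\<dots> = 2^P / 2^K * (1/2::real)^Suc n"
        by (simp add: power_one_over power_add field_simps)
      finally show "f (n + K) \<le> 2^P / 2^K * (1/2::real)^Suc n" .
    next
      show "summable (\<lambda>n. f (n + K))" using sf summable_iff_shift by blast
    next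
      show "summable (\<lambda>n. 2^P / 2^K * (1/2::real)^Suc n)"
        using sums_summable[OF sums_mult[OF power_half_series]] by blast
    qed
    also have "\<dots> = 2^P / 2^K"
      using sums_unique[OF sums_mult[OF power_half_series, of "2^P / 2^K"]] by (metis mult_1_right)
    finally show ?thesis unfolding f_def .
  qed
  have "dist_E N (w, x) (w', x) = (\<Sum>i\<in>UNIV. (\<Sum>k. \<bar>w i k - w' i k\<bar> / 2^(N * Suc k)))"
    by (simp add: dist_E_def)
  also have "\<dots> \<le> (\<Sum>i\<in>(UNIV::'m set). 2^P / 2^K)" by (rule sum_mono) (rule b)
  also have "\<dots> = real (card (UNIV::'m set)) * (2^P / 2^K)" by simp
  finally show ?thesis .
qed

lemma dist_single:
  fixes w w' :: "'m::finite \<Rightarrow> nat \<Rightarrow> real"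
  assumes "\<forall>i k. (i \<noteq> i0 \<or> k \<noteq> K) \<longrightarrow> w i k = w' i k"
  shows "dist_E N (w, x) (w', x) = \<bar>w i0 K - w' i0 K\<bar> / 2^(N * Suc K)"
proof -
  define c where "c = \<bar>w i0 K - w' i0 K\<bar> / 2^(N * Suc K)"
  have e: "(\<lambda>k. \<bar>w i k - w' i k\<bar> / 2^(N * Suc k)) = (\<lambda>k. if k = K then (if i = i0 then c else 0) else 0)" for i
    using assms unfolding c_def by (auto intro!: ext)
  have s: "(\<Sum>k. \<bar>w i k - w' i k\<bar> / 2^(N * Suc k)) = (if i = i0 then c else 0)" for i
    unfolding e using sums_unique[OF sums_single[of K "\<lambda>_. if i = i0 then c else 0"]] by simp
  show ?thesis unfolding dist_E_def prod.case s by (simp add: c_def)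
qed

lemma choose_K:
  assumes "(e::real) > 0"
  shows "\<exists>K\<ge>1. C * (2^P / 2^K) < e"
proof -
  obtain K0 where K0: "C * 2^P / e < 2^K0" using real_arch_pow[of 2 "C * 2^P / e"] by auto
  have "(2::real)^K0 \<le> 2^Suc K0" by simp
  hence "C * 2^P / e < 2^Suc K0" using K0 by linarith
  hence "C * 2^P < e * 2^Suc K0" using assms by (simp add: divide_less_eq mult.commute)
  hence "C * (2^P / 2^Suc K0) < e" by (simp add: field_simps)
  thus ?thesis by (intro exI[of _ "Suc K0"]) simp
qed

lemma Espace_iff: "(w, x) \<in> Espace P Q \<longleftrightarrow> (\<forall>i k. w i k \<in> Dset P Q) \<and> (\<forall>i. x i \<in> Dset P Q)"
  by (simp add: Espace_def)

theorem mainTheorem4: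
  fixes P Q :: nat and F :: "'m::finite \<Rightarrow> ('m \<Rightarrow> real) \<Rightarrow> real"
  assumes "P + Q \<ge> 1"
    and "\<And>i x. (\<forall>j. x j \<in> Dset P Q) \<Longrightarrow> F i x \<in> Dset P Q"
    and "strongly_connected_state_network P Q F"
  shows "devaney_chaotic (Espace P Q) (dist_E (P + Q)) (Gmap P Q F)"
proof -
  note N = assms(1)
  note Fc = assms(2)
  have sc: "(a, b) \<in> (state_edges P Q F)\<^sup>*" if "\<forall>i. a i \<in> Dset P Q" "\<forall>i. b i \<in> Dset P Q" for a b
    using assms(3) that unfolding strongly_connected_state_network_def by blast
  define C where "C = real (card (UNIV::'m set))"
  have T: "topologically_transitive (Espace P Q) (dist_E (P + Q)) (Gmap P Q F)"
    unfolding topologically_transitive_def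
  proof (intro allI impI)
    fix U V :: "(('m \<Rightarrow> nat \<Rightarrow> real) \<times> ('m \<Rightarrow> real)) set"
    assume oU: "d_open (Espace P Q) (dist_E (P + Q)) U" and oV: "d_open (Espace P Q) (dist_E (P + Q)) V"
      and "U \<noteq> {}" "V \<noteq> {}"
    then obtain E1 E2 where E1: "E1 \<in> U" and E2: "E2 \<in> V" by blast
    obtain w1 x1 where e1: "E1 = (w1, x1)" by (cases E1)
    obtain w2 x2 where e2: "E2 = (w2, x2)" by (cases E2)
    have S1: "(\<forall>i k. w1 i k \<in> Dset P Q) \<and> (\<forall>i. x1 i \<in> Dset P Q)"
      using oU E1 e1 unfolding d_open_def Espace_iff by (auto simp: Espace_def)
    have S2: "(\<forall>i k. w2 i k \<in> Dset P Q) \<and> (\<forall>i. x2 i \<in> Dset P Q)"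
      using oV E2 e2 unfolding d_open_def by (auto simp: Espace_def)
    obtain e where e: "e > 0" "\<forall>y\<in>Espace P Q. dist_E (P + Q) E1 y < e \<longrightarrow> y \<in> U"
      using oU E1 unfolding d_open_def by blast
    obtain K where K: "K \<ge> 1" "C * (2^P / 2^K) < e" using choose_K[OF e(1)] by blast
    define y where "y = snd ((Gmap P Q F ^^ K) (w1, x1))"
    have yD: "\<forall>i. y i \<in> Dset P Q" unfolding y_def by (rule iter_D[OF conjunct2[OF S1] Fc])
    obtain L u where u: "\<forall>i k. u i k \<in> Dset P Q"
      "\<forall>w. (\<forall>i k. k < L \<longrightarrow> w i k = u i k) \<longrightarrow> snd ((Gmap P Q F ^^ L) (w, y)) = x2"
      using path[OF sc[OF yD conjunct2[OF S2]]] by blast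
    define w' where "w' = (\<lambda>i k. if k < K then w1 i k else if k < K + L then u i (k - K) else w2 i (k - K - L))"
    have w'D: "\<forall>i k. w' i k \<in> Dset P Q" using S1 S2 u(1) unfolding w'_def by auto
    have inS: "(w', x1) \<in> Espace P Q" using w'D S1 by (simp add: Espace_def)
    have "dist_E (P + Q) (w1, x1) (w', x1) \<le> C * (2^P / 2^K)"
      unfolding C_def by (rule dist_tail) (use N S1 w'D in \<open>auto simp: w'_def\<close>)
    hence inU: "(w', x1) \<in> U" using e(2) inS K(2) e1 by auto
    have eqn: "(Gmap P Q F ^^ (L + K)) (w', x1) = (w2, x2)"
    proof -
      have a1: "snd ((Gmap P Q F ^^ K) (w', x1)) = y"
        unfolding y_def by (rule iter_snd_dep) (simp add: w'_def)
      have a: "(Gmap P Q F ^^ K) (w', x1) = ((\<lambda>i k. w' i (k + K)), y)"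
        by (subst iter_eq) (simp only: a1)
      have b: "snd ((Gmap P Q F ^^ L) ((\<lambda>i k. w' i (k + K)), y)) = x2"
        by (rule u(2)[rule_format]) (simp add: w'_def)
      have c: "(\<lambda>i k. w' i (k + L + K)) = w2" by (simp add: w'_def)
      show ?thesis unfolding funpow_add comp_apply a
        by (subst iter_eq) (simp only: b c)
    qed
    have "(w2, x2) \<in> (Gmap P Q F ^^ (L + K)) ` U"
    proof (rule image_eqI)
      show "(w2, x2) = (Gmap P Q F ^^ (L + K)) (w', x1)" using eqn by simp
      show "(w', x1) \<in> U" by (rule inU)
    qed
    hence "(Gmap P Q F ^^ (L + K)) ` U \<inter> V \<noteq> {}" using E2 e2 by blast
    moreover have "L + K > 0" using K by simp
    ultimately show "\<exists>n>0. (Gmap P Q F ^^ n) ` U \<inter> V \<noteq> {}" by blast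
  qed
  have Pd: "dense_periodic_points (Espace P Q) (dist_E (P + Q)) (Gmap P Q F)"
    unfolding dense_periodic_points_def
  proof (intro ballI allI impI)
    fix E :: "('m \<Rightarrow> nat \<Rightarrow> real) \<times> ('m \<Rightarrow> real)" and e :: real
    assume ES: "E \<in> Espace P Q" and e: "e > 0"
    obtain w x where ex: "E = (w, x)" by (cases E)
    have S1: "(\<forall>i k. w i k \<in> Dset P Q) \<and> (\<forall>i. x i \<in> Dset P Q)" using ES ex by (simp add: Espace_def)
    obtain K where K: "K \<ge> 1" "C * (2^P / 2^K) < e" using choose_K[OF e] by blast
    define y where "y = snd ((Gmap P Q F ^^ K) (w, x))"
    have yD: "\<forall>i. y i \<in> Dset P Q" unfolding y_def by (rule iter_D[OF conjunct2[OF S1] Fc])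
    obtain L u where u: "\<forall>i k. u i k \<in> Dset P Q"
      "\<forall>v. (\<forall>i k. k < L \<longrightarrow> v i k = u i k) \<longrightarrow> snd ((Gmap P Q F ^^ L) (v, y)) = x"
      using path[OF sc[OF yD conjunct2[OF S1]]] by blast
    define p where "p = (\<lambda>i k. if k mod (K + L) < K then w i (k mod (K + L)) else u i (k mod (K + L) - K))"
    have pD: "\<forall>i k. p i k \<in> Dset P Q" using S1 u(1) unfolding p_def by auto
    have inS: "(p, x) \<in> Espace P Q" using pD S1 by (simp add: Espace_def)
    have "dist_E (P + Q) (w, x) (p, x) \<le> C * (2^P / 2^K)"
      unfolding C_def by (rule dist_tail) (use N S1 pD in \<open>auto simp: p_def\<close>)
    hence close: "dist_E (P + Q) E (p, x) < e" using K(2) ex by auto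
    have "(Gmap P Q F ^^ (L + K)) (p, x) = (p, x)"
    proof -
      have a1: "snd ((Gmap P Q F ^^ K) (p, x)) = y"
        unfolding y_def by (rule iter_snd_dep) (simp add: p_def)
      have a: "(Gmap P Q F ^^ K) (p, x) = ((\<lambda>i k. p i (k + K)), y)"
        by (subst iter_eq) (simp only: a1)
      have b: "snd ((Gmap P Q F ^^ L) ((\<lambda>i k. p i (k + K)), y)) = x"
      proof (rule u(2)[rule_format])
        fix i k assume "k < L"
        hence "(k + K) mod (K + L) = k + K" by simp
        thus "p i (k + K) = u i k" by (simp add: p_def)
      qed
      have c: "(\<lambda>i k. p i (k + L + K)) = p"
      proof (intro ext)
        fix i k
        have "(k + L + K) mod (K + L) = k mod (K + L)"
          by (metis add.assoc add.commute mod_add_self2)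
        thus "p i (k + L + K) = p i k" by (simp add: p_def)
      qed
      show ?thesis unfolding funpow_add comp_apply a
        by (subst iter_eq) (simp only: b c)
    qed
    moreover have "L + K > 0" using K by simp
    ultimately show "\<exists>p\<in>Espace P Q. dist_E (P + Q) E p < e \<and> (\<exists>n>0. (Gmap P Q F ^^ n) p = p)"
      using inS close by blast
  qed
  have Sd: "sensitive_dependence (Espace P Q) (dist_E (P + Q)) (Gmap P Q F)"
    unfolding sensitive_dependence_def
  proof (intro exI[of _ "1 / 2^(Q + (P + Q)) / 2"] conjI ballI allI impI)
    show "(0::real) < 1 / 2^(Q + (P + Q)) / 2" by simp
    fix E :: "('m \<Rightarrow> nat \<Rightarrow> real) \<times> ('m \<Rightarrow> real)" and e :: real
    assume ES: "E \<in> Espace P Q" and e: "e > 0"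
    obtain w x where ex: "E = (w, x)" by (cases E)
    have S1: "(\<forall>i k. w i k \<in> Dset P Q) \<and> (\<forall>i. x i \<in> Dset P Q)" using ES ex by (simp add: Espace_def)
    obtain K where K: "C * (2^P / 2^K) < e" using choose_K[OF e] by blast
    define i0 :: 'm where "i0 = undefined"
    define v where "v = (if w i0 K = 0 then 1 / 2^Q else (0::real))"
    have vD: "v \<in> Dset P Q" unfolding v_def using D_one[OF N] D_zero by simp
    have dv: "\<bar>w i0 K - v\<bar> \<ge> 1 / 2^Q"
    proof (cases "w i0 K = 0")
      case True thus ?thesis by (simp add: v_def)
    next
      case False
      have "1 / 2^Q \<le> w i0 K" using D_pos S1 False by blast
      thus ?thesis using False by (simp add: v_def)
    qed
    define w' where "w' = (\<lambda>i k. if i = i0 \<and> k = K then v else w i k)"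
    have w'D: "\<forall>i k. w' i k \<in> Dset P Q" using S1 vD unfolding w'_def by auto
    have inS: "(w', x) \<in> Espace P Q" using w'D S1 by (simp add: Espace_def)
    have "dist_E (P + Q) (w, x) (w', x) \<le> C * (2^P / 2^K)"
      unfolding C_def by (rule dist_tail) (use N S1 w'D in \<open>auto simp: w'_def\<close>)
    hence close: "dist_E (P + Q) E (w', x) < e" using K ex by auto
    define s where "s = snd ((Gmap P Q F ^^ K) (w, x))"
    have a1: "(Gmap P Q F ^^ K) (w, x) = ((\<lambda>i k. w i (k + K)), s)"
      unfolding s_def by (rule iter_eq)
    have a3: "snd ((Gmap P Q F ^^ K) (w', x)) = s"
      unfolding s_def by (rule iter_snd_dep) (simp add: w'_def)
    have a2: "(Gmap P Q F ^^ K) (w', x) = ((\<lambda>i k. w' i (k + K)), s)"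
      by (subst iter_eq) (simp only: a3)
    have "dist_E (P + Q) ((\<lambda>i k. w i (k + K)), s) ((\<lambda>i k. w' i (k + K)), s)
        = \<bar>w i0 (0 + K) - w' i0 (0 + K)\<bar> / 2^((P + Q) * Suc 0)"
      by (rule dist_single) (auto simp: w'_def)
    also have "\<dots> = \<bar>w i0 K - v\<bar> / 2^(P + Q)" by (simp add: w'_def)
    also have "\<dots> \<ge> 1 / 2^Q / 2^(P + Q)" by (rule divide_right_mono[OF dv]) simp
    finally have "dist_E (P + Q) ((Gmap P Q F ^^ K) E) ((Gmap P Q F ^^ K) (w', x)) \<ge> 1 / 2^Q / 2^(P + Q)"
      using a1 a2 ex by simp
    moreover have "1 / 2^Q / 2^(P + Q) > 1 / 2^(Q + (P + Q)) / (2::real)"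
      by (simp add: power_add field_simps)
    ultimately have "dist_E (P + Q) ((Gmap P Q F ^^ K) E) ((Gmap P Q F ^^ K) (w', x)) > 1 / 2^(Q + (P + Q)) / 2"
      by linarith
    thus "\<exists>y\<in>Espace P Q. dist_E (P + Q) E y < e \<and>
            (\<exists>n. dist_E (P + Q) ((Gmap P Q F ^^ n) E) ((Gmap P Q F ^^ n) y) > 1 / 2^(Q + (P + Q)) / 2)"
      using inS close by blast
  qed
  show ?thesis unfolding devaney_chaotic_def using T Pd Sd by blast
qed

end
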